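(* Let $(Q(M))_{M\in\mathcal N}$ be a family of matrices satisfying (A1)–(A3), and let $p$ be a stochastic choice function such that $p(\cdot,\{i,j\})\bigl(I-Q(\{i,j\})\bigr)=0$ for all distinct $i,j\in X$. Then for a menu $M\in\mathcal N$ we have $p(\cdot,M)\bigl(I-Q(M)\bigr)=0$ if and only if for every $j\in M$ $$\sum_{\substack{i\in M\setminus\{j\}:\\ q_{ji}(M)>0}}\frac{\delta_{ji}(M)\,q_{ji}(M)}{p(i,\{i,j\})}\;-\sum_{\substack{i\in M\setminus\{j\}:\\ q_{ji}(M)=0,\ q_{ji}(\{i,j\})=0}}\frac{\delta_{ij}(M)\,q_{ij}(M)}{p(j,\{i,j\})}=0$$ (all denominators appearing here are strictly positive).
   Context: $X$ is a finite set of alternatives; a menu is a nonempty subset of $X$, and $\mathcal N$ denotes the set of all menus. A stochastic choice function is a map $p:X\times\mathcal N\to[0,1]$ with $\sum_{i\in M}p(i,M)=1$ and $p(i,M)=0$ for $i\notin M$; $p(\cdot,M)$ denotes the row vector $(p(i,M))_{i\in M}$. For $M\in\mathcal N$ and $i,j\in M$ let $\delta_{ij}(M)=p(i,M)\,p(j,\{i,j\})-p(i,\{i,j\})\,p(j,M)$. The family $Q(M)=(q_{ij}(M))_{i,j\in M}$, $M\in\mathcal N$, has nonnegative entries and satisfies for all $M\in\mathcal N$ and distinct $i,j\in M$: (A1) $q_{ii}(M)=1-\sum_{k\neq i}q_{ik}(M)>0$; (A2) if $q_{ij}(\{i,j\})=0$ then $q_{ji}(\{i,j\})>0$; (A3)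 $q_{ij}(\{i,j\})\,q_{ji}(M)=q_{ji}(\{i,j\})\,q_{ij}(M)$. *)

theory Defs
  imports Complex_Main
begin

text \<open>A stochastic choice function is p :: 'a => 'a set => real, where p i M
is the probability of choosing i from menu M. The matrix family is
Q :: 'a set => 'a => 'a => real with Q M i j = q_ij(M).\<close>

definition menu :: "'a set \<Rightarrow> 'a set \<Rightarrow> bool" where
  "menu X M \<longleftrightarrow> M \<subseteq> X \<and> M \<noteq> {}"

definition stoch_choice :: "'a set \<Rightarrow> ('a \<Rightarrow> 'a set \<Rightarrow> real) \<Rightarrow> bool" where
  "stoch_choice X p \<longleftrightarrow>
     (\<forall>M. menu X M \<longrightarrow>
        (\<forall>i\<in>X. 0 \<le> p i M \<and> p i M \<le> 1) \<and>
        (\<Sum>i\<in>M. p i M) = 1 \<and>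
        (\<forall>i\<in>X. i \<notin> M \<longrightarrow> p i M = 0))"

definition Q_family :: "'a set \<Rightarrow> ('a set \<Rightarrow> 'a \<Rightarrow> 'a \<Rightarrow> real) \<Rightarrow> bool" where
  "Q_family X Q \<longleftrightarrow>
     (\<forall>M. menu X M \<longrightarrow>
        (\<forall>i\<in>M. \<forall>j\<in>M. 0 \<le> Q M i j) \<and>
        (\<forall>i\<in>M. Q M i i = 1 - (\<Sum>k\<in>M - {i}. Q M i k) \<and> Q M i i > 0) \<and>
        (\<forall>i\<in>M. \<forall>j\<in>M. i \<noteq> j \<longrightarrow>
            (Q {i,j} i j = 0 \<longrightarrow> Q {i,j} j i > 0) \<and>
            Q {i,j} i j * Q M j i = Q {i,j} j i * Q M i j))"

definition stationary :: "('a \<Rightarrow> 'a set \<Rightarrow> real) \<Rightarrow> ('a set \<Rightarrow> 'a \<Rightarrow> 'a \<Rightarrow> real) \<Rightarrow> 'a set \<Rightarrow> bool" where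
  "stationary p Q M \<longleftrightarrow>
     (\<forall>j\<in>M. (\<Sum>i\<in>M. p i M * ((if i = j then 1 else 0) - Q M i j)) = 0)"

definition delta :: "('a \<Rightarrow> 'a set \<Rightarrow> real) \<Rightarrow> 'a set \<Rightarrow> 'a \<Rightarrow> 'a \<Rightarrow> real" where
  "delta p M i j = p i M * p j {i,j} - p i {i,j} * p j M"

end

theory Submission
  imports Defs
begin

lemma alg_pos:
  fixes pi pj a b qji qij :: real
  assumes "pi + pj = 1" "pi * a = pj * b" "0 \<le> pi" "0 \<le> pj" "0 \<le> a" "0 \<le> b"
    "a = 0 \<longrightarrow> b > 0" "a * qji = b * qij" "0 \<le> qji"
  shows "(qji > 0 \<longrightarrow> pi > 0) \<and> (qji = 0 \<and> b = 0 \<longrightarrow> pj > 0)"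
proof safe
  assume q: "qji > 0"
  show "pi > 0"
  proof (rule ccontr)
    assume "\<not> pi > 0"
    hence "pi = 0" using assms by auto
    hence "pj = 1" "b = 0" using assms by auto
    hence "a > 0" using assms by auto
    hence "a * qji > 0" using q by simp
    thus False using assms \<open>b = 0\<close> by simp
  qed
next
  assume "qji = 0" "b = 0"
  show "pj > 0"
  proof (rule ccontr)
    assume "\<not> pj > 0"
    hence "pj = 0" using assms by auto
    hence "pi = 1" using assms by auto
    hence "a = 0" using assms \<open>pj = 0\<close> by simp
    thus False using assms \<open>b = 0\<close> by simp
  qed
qed

lemma alg_term:
  fixes pi pj a b qji qij pjM piM :: real
  assumes "pi + pj = 1" "pi * a = pj * b" "0 \<le> pi" "0 \<le> pj" "0 \<le> a" "0 \<le> b"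
    "a = 0 \<longrightarrow> b > 0" "a * qji = b * qij" "0 \<le> qji"
  shows "pjM * qji - piM * qij =
    (if qji > 0 then (pjM * pi - pj * piM) * qji / pi else 0)
  - (if qji = 0 \<and> b = 0 then (piM * pj - pi * pjM) * qij / pj else 0)"
proof -
  note P = alg_pos[OF assms]
  consider "qji > 0" | "qji = 0 \<and> b = 0" | "qji = 0 \<and> b > 0" using assms by linarith
  thus ?thesis
  proof cases
    case 1
    hence pip: "pi > 0" using P by auto
    have bp: "b > 0"
    proof (rule ccontr)
      assume "\<not> b > 0" hence "b = 0" using assms by auto
      hence "a = 0" using assms pip by simp
      thus False using assms \<open>b = 0\<close> by simp
    qed
    have "qij = a * qji / b" using assms(8) bp by (simp add: field_simps)
    hence "piM * qij = piM * (pi * a) * qji / (b * pi)" using pip bp by (simp add: field_simps)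
    also have "\<dots> = piM * pj * qji / pi" using assms(2) bp pip by (simp add: field_simps)
    finally have "piM * qij = piM * pj * qji / pi" .
    hence "pi * (piM * qij) = piM * pj * qji" using pip by (simp add: field_simps)
    thus ?thesis using 1 pip by (simp add: field_simps) (metis mult.commute mult.left_commute mult_cancel_left)
  next
    case 2
    hence pjp: "pj > 0" using P by auto
    have "a > 0" using 2 assms by auto
    hence "pi = 0" using assms 2 by simp
    thus ?thesis using 2 pjp by (simp add: field_simps)
  next
    case 3
    hence "qij = 0" using assms by simp
    thus ?thesis using 3 by simp
  qed
qed

theorem lemmaA3:
  fixes X :: "'a set" and p :: "'a \<Rightarrow> 'a set \<Rightarrow> real"
    and Q :: "'a set \<Rightarrow> 'a \<Rightarrow> 'a \<Rightarrow> real" and M :: "'a set"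
  assumes "finite X"
    and "Q_family X Q"
    and "stoch_choice X p"
    and "\<And>i j. i \<in> X \<Longrightarrow> j \<in> X \<Longrightarrow> i \<noteq> j \<Longrightarrow> stationary p Q {i, j}"
    and "menu X M"
  shows "(stationary p Q M \<longleftrightarrow>
           (\<forall>j\<in>M.
              (\<Sum>i\<in>{i \<in> M - {j}. Q M j i > 0}. delta p M j i * Q M j i / p i {i, j})
            - (\<Sum>i\<in>{i \<in> M - {j}. Q M j i = 0 \<and> Q {i, j} j i = 0}.
                   delta p M i j * Q M i j / p j {i, j}) = 0))
       \<and> (\<forall>j\<in>M. \<forall>i\<in>M - {j}.
              (Q M j i > 0 \<longrightarrow> p i {i, j} > 0)
            \<and> (Q M j i = 0 \<and> Q {i, j} j i = 0 \<longrightarrow> p j {i, j} > 0))"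
proof -
  have MX: "M \<subseteq> X" "M \<noteq> {}" using assms(5) by (auto simp: menu_def)
  have fin: "finite M" using MX assms(1) finite_subset by blast
  have QM: "\<forall>i\<in>M. \<forall>j\<in>M. 0 \<le> Q M i j"
    "\<forall>i\<in>M. Q M i i = 1 - (\<Sum>k\<in>M - {i}. Q M i k)"
    "\<forall>i\<in>M. \<forall>j\<in>M. i \<noteq> j \<longrightarrow> Q {i,j} i j * Q M j i = Q {i,j} j i * Q M i j"
    using assms(2) assms(5) unfolding Q_family_def by blast+
  have pair: "p i {i,j} + p j {i,j} = 1 \<and> p i {i,j} * Q {i,j} i j = p j {i,j} * Q {i,j} j i
     \<and> 0 \<le> p i {i,j} \<and> 0 \<le> p j {i,j} \<and> 0 \<le> Q {i,j} i j \<and> 0 \<le> Q {i,j} j i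
     \<and> (Q {i,j} i j = 0 \<longrightarrow> Q {i,j} j i > 0)"
    if ij: "i \<in> X" "j \<in> X" "i \<noteq> j" for i j
  proof -
    have mn: "menu X {i,j}" using ij by (auto simp: menu_def)
    have sc: "(\<Sum>k\<in>{i,j}. p k {i,j}) = 1" "0 \<le> p i {i,j}" "0 \<le> p j {i,j}"
      using assms(3) mn ij unfolding stoch_choice_def by blast+
    have Qp: "0 \<le> Q {i,j} i j" "0 \<le> Q {i,j} j i"
      "Q {i,j} j j = 1 - (\<Sum>k\<in>{i,j} - {j}. Q {i,j} j k)"
      "Q {i,j} i j = 0 \<longrightarrow> Q {i,j} j i > 0"
      using assms(2) mn ij unfolding Q_family_def by blast+
    have e: "{i,j} - {j} = {i}" using ij by auto
    have dj: "Q {i,j} j j = 1 - Q {i,j} j i" using Qp(3) e by simp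
    have st: "(\<Sum>k\<in>{i,j}. p k {i,j} * ((if k = j then 1 else 0) - Q {i,j} k j)) = 0"
      using assms(4)[OF ij] unfolding stationary_def by blast
    hence "p i {i,j} * Q {i,j} i j = p j {i,j} * Q {i,j} j i"
      using ij dj by (simp add: algebra_simps)
    thus ?thesis using sc ij Qp by simp
  qed
  have key: "p i {i,j} + p j {i,j} = 1 \<and> p i {i,j} * Q {i,j} i j = p j {i,j} * Q {i,j} j i
     \<and> 0 \<le> p i {i,j} \<and> 0 \<le> p j {i,j} \<and> 0 \<le> Q {i,j} i j \<and> 0 \<le> Q {i,j} j i
     \<and> (Q {i,j} i j = 0 \<longrightarrow> Q {i,j} j i > 0) \<and> Q {i,j} i j * Q M j i = Q {i,j} j i * Q M i j
     \<and> 0 \<le> Q M j i"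
    if ij: "j \<in> M" "i \<in> M - {j}" for i j
    using pair[of i j] ij MX QM by auto
  have pos: "\<forall>j\<in>M. \<forall>i\<in>M - {j}.
              (Q M j i > 0 \<longrightarrow> p i {i, j} > 0)
            \<and> (Q M j i = 0 \<and> Q {i, j} j i = 0 \<longrightarrow> p j {i, j} > 0)"
    using key alg_pos by blast
  have col: "(\<Sum>i\<in>M. p i M * ((if i = j then 1 else 0) - Q M i j))
     = (\<Sum>i\<in>M - {j}. p j M * Q M j i - p i M * Q M i j)" if j: "j \<in> M" for j
  proof -
    have "(\<Sum>i\<in>M. p i M * ((if i = j then 1 else 0) - Q M i j))
       = p j M * (1 - Q M j j) + (\<Sum>i\<in>M - {j}. p i M * ((if i = j then 1 else 0) - Q M i j))"
      using sum.remove[OF fin j, of "\<lambda>i. p i M * ((if i = j then 1 else 0) - Q M i j)"] by simp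
    also have "\<dots> = p j M * (\<Sum>k\<in>M - {j}. Q M j k) - (\<Sum>i\<in>M - {j}. p i M * Q M i j)"
      using QM(2) j by (simp add: sum_negf[symmetric])
    also have "\<dots> = (\<Sum>i\<in>M - {j}. p j M * Q M j i - p i M * Q M i j)"
      by (simp add: sum_subtractf sum_distrib_left)
    finally show ?thesis .
  qed
  have trm: "(\<Sum>i\<in>M - {j}. p j M * Q M j i - p i M * Q M i j) =
     (\<Sum>i\<in>{i \<in> M - {j}. Q M j i > 0}. delta p M j i * Q M j i / p i {i, j})
            - (\<Sum>i\<in>{i \<in> M - {j}. Q M j i = 0 \<and> Q {i, j} j i = 0}.
                   delta p M i j * Q M i j / p j {i, j})" if j: "j \<in> M" for j
  proof -
    have f: "finite (M - {j})" using fin by simp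
    have "(\<Sum>i\<in>M - {j}. p j M * Q M j i - p i M * Q M i j) =
      (\<Sum>i\<in>M - {j}. (if Q M j i > 0 then delta p M j i * Q M j i / p i {i, j} else 0)
        - (if Q M j i = 0 \<and> Q {i, j} j i = 0 then delta p M i j * Q M i j / p j {i, j} else 0))"
    proof (rule sum.cong[OF refl])
      fix i assume i: "i \<in> M - {j}"
      have c: "{j,i} = {i,j}" by (simp add: insert_commute)
      show "p j M * Q M j i - p i M * Q M i j =
        (if Q M j i > 0 then delta p M j i * Q M j i / p i {i, j} else 0)
        - (if Q M j i = 0 \<and> Q {i, j} j i = 0 then delta p M i j * Q M i j / p j {i, j} else 0)"
        unfolding delta_def c
        using alg_term[of "p i {i,j}" "p j {i,j}" "Q {i,j} i j" "Q {i,j} j i" "Q M j i" "Q M i j"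
            "p j M" "p i M"] key[OF j i] by simp
    qed
    also have "\<dots> = (\<Sum>i\<in>{i \<in> M - {j}. Q M j i > 0}. delta p M j i * Q M j i / p i {i, j})
            - (\<Sum>i\<in>{i \<in> M - {j}. Q M j i = 0 \<and> Q {i, j} j i = 0}.
                   delta p M i j * Q M i j / p j {i, j})"
      by (simp only: sum_subtractf sum.inter_filter[OF f])
    finally show ?thesis .
  qed
  show ?thesis using pos col trm unfolding stationary_def by simp
qed

end
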